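(* Assume only upper-bound group constraints (with $\mathcal S\ne\emptyset$) and let $F$ be a maxmin-fair distribution over $\mathcal S$ for satisfaction $A=V$. Then for every probability distribution $D$ over $\mathcal S$, $$\max_{u\in\mathcal U}F[u]-\min_{v\in\mathcal U}F[v]\ \le\ \max_{u\in\mathcal U}D[u]-\min_{v\in\mathcal U}D[v].$$
   Context: Ranking setting: $\mathcal U=\{u_1,\dots,u_n\}$ finite set of individuals partitioned into groups $C_1,\dots,C_t$; $R:\mathcal U\to\mathbb R$ relevance with distinct values; rankings are bijections $r:\mathcal U\to[n]$. Only upper bounds: $\mathcal S=\{r:\ |\{u\in C_k: r(u)\le i\}|\le u_i^k\ \forall i\in[n],k\in[t]\}$ for given integers $u_i^k$. Value function $V(r,u)=f(r(u))-g(u)$ with $f:[n]\to\mathbb R$ non-increasing and $g:\mathcal U\to\mathbb R$ satisfying $R(u)\ge R(v)\Rightarrow g(u)\ge g(v)$. For a distribution $D$ over $\mathcal S$, $D[u]=\mathbb E_{r\sim D}[V(r,u)]$. $F$ is maxmin-fair if for every distribution $D$ over $\mathcal S$ and every $u$: $D[u]>F[u]$ implies there is $v$ with $D[v]<F[v]\le F[u]$. *)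

theory Defs
  imports "HOL-Probability.Probability"
begin

text \<open>Rankings of the finite set U (with n = card U): bijections U -> {1..n}.
  To make the set of rankings a genuine finite set of functions we fix the
  value 0 outside U (extensional representation).\<close>
definition is_ranking :: "'a set \<Rightarrow> ('a \<Rightarrow> nat) \<Rightarrow> bool" where
  "is_ranking U r \<longleftrightarrow> bij_betw r U {1..card U} \<and> (\<forall>u. u \<notin> U \<longrightarrow> r u = 0)"

definition feasible :: "'a set \<Rightarrow> (nat \<Rightarrow> 'a set) \<Rightarrow> nat \<Rightarrow> (nat \<Rightarrow> nat \<Rightarrow> int)
    \<Rightarrow> ('a \<Rightarrow> nat) set" where
  "feasible U C t ub = {r. is_ranking U r \<and>
     (\<forall>i\<in>{1..card U}. \<forall>k\<in>{1..t}. int (card {u \<in> C k. r u \<le> i}) \<le> ub i k)}"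

definition V :: "(nat \<Rightarrow> real) \<Rightarrow> ('a \<Rightarrow> real) \<Rightarrow> ('a \<Rightarrow> nat) \<Rightarrow> 'a \<Rightarrow> real" where
  "V f g r u = f (r u) - g u"

definition dval :: "(nat \<Rightarrow> real) \<Rightarrow> ('a \<Rightarrow> real) \<Rightarrow> ('a \<Rightarrow> nat) pmf \<Rightarrow> 'a \<Rightarrow> real" where
  "dval f g D u = measure_pmf.expectation D (\<lambda>r. V f g r u)"

definition maxmin_fair :: "'a set \<Rightarrow> ('a \<Rightarrow> nat) set \<Rightarrow> (nat \<Rightarrow> real) \<Rightarrow> ('a \<Rightarrow> real)
    \<Rightarrow> ('a \<Rightarrow> nat) pmf \<Rightarrow> bool" where
  "maxmin_fair U S f g F \<longleftrightarrow> set_pmf F \<subseteq> S \<and>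
     (\<forall>D. set_pmf D \<subseteq> S \<longrightarrow> (\<forall>u\<in>U. dval f g D u > dval f g F u \<longrightarrow>
        (\<exists>v\<in>U. dval f g D v < dval f g F v \<and> dval f g F v \<le> dval f g F u)))"

end

theory Submission
  imports Defs
begin


locale rk_setting =
  fixes U :: "'a set" and C :: "nat \<Rightarrow> 'a set" and t :: nat
    and ub :: "nat \<Rightarrow> nat \<Rightarrow> int" and f :: "nat \<Rightarrow> real"
  assumes finU: "finite U"
    and partC: "\<forall>k\<in>{1..t}. C k \<subseteq> U"
    and disjC: "\<forall>k\<in>{1..t}. \<forall>l\<in>{1..t}. k \<noteq> l \<longrightarrow> C k \<inter> C l = {}"
    and coverC: "(\<Union>k\<in>{1..t}. C k) = U"
    and f_mono: "\<forall>i j. 1 \<le> i \<longrightarrow> i \<le> j \<longrightarrow> j \<le> card U \<longrightarrow> f j \<le> f i"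
begin

abbreviation "SS \<equiv> feasible U C t ub"

lemma rk_range: "s \<in> SS \<Longrightarrow> v \<in> U \<Longrightarrow> 1 \<le> s v \<and> s v \<le> card U"
  unfolding feasible_def is_ranking_def bij_betw_def by auto

lemma rk_inj: "s \<in> SS \<Longrightarrow> inj_on s U"
  unfolding feasible_def is_ranking_def bij_betw_def by auto

lemma rk_surj: "s \<in> SS \<Longrightarrow> p \<in> {1..card U} \<Longrightarrow> \<exists>x\<in>U. s x = p"
proof -
  assume "s \<in> SS" "p \<in> {1..card U}"
  then have "p \<in> s ` U" unfolding feasible_def is_ranking_def bij_betw_def by auto
  then show ?thesis by auto
qed

lemma rk_bij: "s \<in> SS \<Longrightarrow> bij_betw s U {1..card U}"
  unfolding feasible_def is_ranking_def by auto

lemma rk_ub: "s \<in> SS \<Longrightarrow> i \<in> {1..card U} \<Longrightarrow> k \<in> {1..t} \<Longrightarrow> int (card {u \<in> C k. s u \<le> i}) \<le> ub i k"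
  unfolding feasible_def by auto

lemma finite_SS: "finite SS"
proof -
  have "SS \<subseteq> {s. \<forall>x. (x \<in> U \<longrightarrow> s x \<in> {1..card U}) \<and> (x \<notin> U \<longrightarrow> s x = 0)}"
    unfolding feasible_def is_ranking_def bij_betw_def by auto
  moreover have "finite {s. \<forall>x. (x \<in> U \<longrightarrow> s x \<in> {1..card U}) \<and> (x \<notin> U \<longrightarrow> s x = (0::nat))}"
    by (rule finite_set_of_finite_funs) (auto simp: finU)
  ultimately show ?thesis by (rule finite_subset)
qed

lemma finC: "k \<in> {1..t} \<Longrightarrow> finite (C k)"
  using partC finU finite_subset by blast

lemma group_of: "x \<in> U \<Longrightarrow> \<exists>k\<in>{1..t}. x \<in> C k"
  using coverC by auto

lemma group_uniq: "k \<in> {1..t} \<Longrightarrow> l \<in> {1..t} \<Longrightarrow> x \<in> C k \<Longrightarrow> x \<in> C l \<Longrightarrow> k = l"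
  using disjC by blast

lemma swap_feasible:
  assumes s: "s \<in> SS" and xU: "x \<in> U" and yU: "y \<in> U" and lt: "s x < s y"
    and hyp: "\<And>j k. k \<in> {1..t} \<Longrightarrow> j \<in> {1..card U} \<Longrightarrow> s x \<le> j \<Longrightarrow> j < s y \<Longrightarrow> y \<in> C k
               \<Longrightarrow> x \<notin> C k \<Longrightarrow> int (card {z \<in> C k. s z \<le> j}) + 1 \<le> ub j k"
  shows "s(x := s y, y := s x) \<in> SS"
proof -
  let ?s = "s(x := s y, y := s x)"
  have xy: "x \<noteq> y" using lt by auto
  have inj: "inj_on s U" using rk_inj[OF s] .
  have "inj_on ?s U"
    unfolding inj_on_def using inj xU yU xy by (auto dest: inj_onD)
  moreover have "?s ` U = s ` U"
  proof
    show "?s ` U \<subseteq> s ` U" using xU yU by auto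
    show "s ` U \<subseteq> ?s ` U"
    proof
      fix w assume "w \<in> s ` U"
      then obtain z where z: "z \<in> U" "w = s z" by auto
      show "w \<in> ?s ` U"
      proof (cases "z = x")
        case True then show ?thesis using z yU xy by (auto intro!: image_eqI[where x=y])
      next
        case False
        show ?thesis
        proof (cases "z = y")
          case True then show ?thesis using z xU xy by (auto intro!: image_eqI[where x=x])
        next
          case False then show ?thesis using z \<open>z \<noteq> x\<close> by (auto intro!: image_eqI[where x=z])
        qed
      qed
    qed
  qed
  ultimately have bij: "bij_betw ?s U {1..card U}"
    using rk_bij[OF s] unfolding bij_betw_def by auto
  have out: "\<forall>u. u \<notin> U \<longrightarrow> ?s u = 0"
    using s xU yU unfolding feasible_def is_ranking_def by auto
  have cnt: "int (card {z \<in> C k. ?s z \<le> j}) \<le> ub j k" if k: "k \<in> {1..t}" and j: "j \<in> {1..card U}" for j k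
  proof -
    let ?A = "{z \<in> C k. s z \<le> j}" and ?A' = "{z \<in> C k. ?s z \<le> j}"
    have finA: "finite ?A" using finC[OF k] by auto
    have base: "int (card ?A) \<le> ub j k" using rk_ub[OF s j k] .
    show ?thesis
    proof (cases "y \<in> C k \<and> x \<notin> C k \<and> s x \<le> j \<and> j < s y")
      case True
      have "s x \<le> s y" using lt by simp
      then have "?A' \<subseteq> insert y ?A" using xy by auto
      hence "card ?A' \<le> card (insert y ?A)" using finA by (intro card_mono) auto
      also have "\<dots> \<le> card ?A + 1" by (simp add: card_insert_le_m1 card_insert_if finA)
      finally show ?thesis using hyp[OF k j] True by linarith
    next
      case False
      have "card ?A' \<le> card ?A"
      proof (cases "s x \<le> j \<and> j < s y \<and> y \<in> C k \<and> x \<in> C k")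
        case True
        have "?A' \<subseteq> insert y (?A - {x})" using xy True by auto
        hence "card ?A' \<le> card (insert y (?A - {x}))" using finA by (intro card_mono) auto
        also have "\<dots> \<le> card (?A - {x}) + 1" by (simp add: card_insert_if finA)
        also have "\<dots> = card ?A" using True finA
          by (simp add: card_Diff_singleton) (metis Suc_pred card_gt_0_iff empty_iff mem_Collect_eq)
        finally show ?thesis .
      next
        case False2: False
        have "?A' \<subseteq> ?A"
        proof
          fix z assume z: "z \<in> ?A'"
          show "z \<in> ?A"
          proof (cases "z = x \<or> z = y")
            case True
            have "s x \<le> s y" using lt by simp
            then show ?thesis using z False False2 lt xy by (auto split: if_splits)
          next
            case False then show ?thesis using z by auto
          qed
        qed
        then show ?thesis using finA by (intro card_mono) auto
      qed
      then show ?thesis using base by linarith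
    qed
  qed
  show ?thesis unfolding feasible_def is_ranking_def using bij out cnt by auto
qed

end


context rk_setting begin

lemma abel:
  assumes s: "s \<in> SS" and L: "L \<subseteq> U"
  shows "(\<Sum>v\<in>L. f (s v)) = f (card U) * card L
           + (\<Sum>i\<in>{1..<card U}. (f i - f (Suc i)) * card {v\<in>L. s v \<le> i})"
proof -
  have finL: "finite L" using L finU finite_subset by blast
  have tel: "f p = f (card U) + (\<Sum>i\<in>{1..<card U}. if p \<le> i then f i - f (Suc i) else 0)"
    if p: "p \<in> {1..card U}" for p
  proof -
    have "(\<Sum>i=p..<card U. f i - f (Suc i)) = f p - f (card U)"
      using sum_Suc_diff'[of p "card U" "\<lambda>i. - f i"] p by simp
    moreover have "{p..<card U} = {i\<in>{1..<card U}. p \<le> i}" using p by auto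
    moreover have "(\<Sum>i\<in>{i\<in>{1..<card U}. p \<le> i}. f i - f (Suc i))
        = (\<Sum>i\<in>{1..<card U}. if p \<le> i then f i - f (Suc i) else 0)"
      by (rule sum.inter_filter) simp
    ultimately show ?thesis by simp
  qed
  have "(\<Sum>v\<in>L. f (s v)) = (\<Sum>v\<in>L. f (card U) + (\<Sum>i\<in>{1..<card U}. if s v \<le> i then f i - f (Suc i) else 0))"
    using L rk_range[OF s] by (intro sum.cong refl tel) auto
  also have "\<dots> = f (card U) * card L + (\<Sum>v\<in>L. \<Sum>i\<in>{1..<card U}. if s v \<le> i then f i - f (Suc i) else 0)"
    by (simp add: sum.distrib)
  also have "(\<Sum>v\<in>L. \<Sum>i\<in>{1..<card U}. if s v \<le> i then f i - f (Suc i) else 0)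
      = (\<Sum>i\<in>{1..<card U}. \<Sum>v\<in>L. if s v \<le> i then f i - f (Suc i) else 0)"
    by (rule sum.swap)
  also have "\<dots> = (\<Sum>i\<in>{1..<card U}. (f i - f (Suc i)) * card {v\<in>L. s v \<le> i})"
  proof (rule sum.cong[OF refl])
    fix i
    have "(\<Sum>v\<in>L. if s v \<le> i then f i - f (Suc i) else 0) = (\<Sum>v\<in>{v\<in>L. s v \<le> i}. f i - f (Suc i))"
      by (rule sum.inter_filter[symmetric]) (rule finL)
    then show "(\<Sum>v\<in>L. if s v \<le> i then f i - f (Suc i) else 0) = (f i - f (Suc i)) * card {v\<in>L. s v \<le> i}"
      by simp
  qed
  finally show ?thesis .
qed

lemma card_groups:
  assumes "B \<subseteq> U"
  shows "card B = (\<Sum>k\<in>{1..t}. card (B \<inter> C k))"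
proof -
  have "B = (\<Union>k\<in>{1..t}. B \<inter> C k)" using assms coverC by auto
  then have "card B = card (\<Union>k\<in>{1..t}. B \<inter> C k)" by simp
  also have "\<dots> = (\<Sum>k\<in>{1..t}. card (B \<inter> C k))"
    by (rule card_UN_disjoint) (use finC disjC in auto)
  finally show ?thesis .
qed

end


context rk_setting begin

lemma key:
  assumes L: "L \<subseteq> U" and r0: "r0 \<in> SS" and r': "r' \<in> SS"
  shows "\<exists>r1\<in>SS. (\<forall>v\<in>L. r1 v \<le> r0 v) \<and> (\<Sum>v\<in>L. f (r' v)) \<le> (\<Sum>v\<in>L. f (r1 v))"
proof -
  have finL: "finite L" using L finU finite_subset by blast
  define P where "P = (\<lambda>s. s \<in> SS \<and> (\<forall>v\<in>L. s v \<le> r0 v))"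
  have "P r0" unfolding P_def using r0 by auto
  from ex_has_least_nat[of P r0 "\<lambda>s. \<Sum>v\<in>L. s v", OF this]
  obtain rs where Prs: "P rs" and minrs: "\<And>s. P s \<Longrightarrow> (\<Sum>v\<in>L. rs v) \<le> (\<Sum>v\<in>L. s v)" by blast
  have rs: "rs \<in> SS" and dom: "\<forall>v\<in>L. rs v \<le> r0 v" using Prs unfolding P_def by auto
  have injrs: "inj_on rs U" using rk_inj[OF rs] .
  have noswap: False
    if xU: "x \<in> U" and xL: "x \<notin> L" and yL: "y \<in> L" and lt: "rs x < rs y"
      and hyp: "\<And>j k. k \<in> {1..t} \<Longrightarrow> j \<in> {1..card U} \<Longrightarrow> rs x \<le> j \<Longrightarrow> j < rs y \<Longrightarrow> y \<in> C k
               \<Longrightarrow> x \<notin> C k \<Longrightarrow> int (card {z \<in> C k. rs z \<le> j}) + 1 \<le> ub j k" for x y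
  proof -
    have yU: "y \<in> U" using yL L by auto
    let ?s = "rs(x := rs y, y := rs x)"
    have sS: "?s \<in> SS" by (rule swap_feasible[OF rs xU yU lt hyp])
    have le: "\<forall>v\<in>L. ?s v \<le> rs v" using xL lt by auto
    have "P ?s" unfolding P_def using sS le dom by (meson order_trans)
    moreover have "(\<Sum>v\<in>L. ?s v) < (\<Sum>v\<in>L. rs v)"
      by (rule sum_strict_mono_ex1[OF finL le]) (use yL xL lt in auto)
    ultimately show False using minrs by fastforce
  qed
  have samegroup: False
    if a: "a \<in> {1..t}" and xa: "x \<in> C a" and ya: "y \<in> C a" and xL: "x \<notin> L" and yL: "y \<in> L"
      and lt: "rs x < rs y" for a x y
  proof (rule noswap[OF _ xL yL lt])
    show "x \<in> U" using partC a xa by auto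
  next
    fix j k assume "k \<in> {1..t}" "y \<in> C k" "x \<notin> C k"
    then show "int (card {z \<in> C k. rs z \<le> j}) + 1 \<le> ub j k"
      using group_uniq[OF a, of k y] ya xa by auto
  qed
  have cnt: "card {v\<in>L. r' v \<le> i} \<le> card {v\<in>L. rs v \<le> i}" for i
  proof (induction i)
    case 0
    have "{v\<in>L. r' v \<le> 0} = {}" using rk_range[OF r'] L by fastforce
    then have "card {v\<in>L. r' v \<le> 0} = 0" by (simp only: card.empty)
    then show ?case by linarith
  next
    case (Suc i)
    let ?p = "Suc i"
    show ?case
    proof (rule ccontr)
      assume "\<not> ?case"
      then have c1: "card {v\<in>L. rs v \<le> ?p} < card {v\<in>L. r' v \<le> ?p}" by simp
      have "{v\<in>L. r' v \<le> ?p} = {v\<in>L. r' v \<le> i} \<union> {v\<in>L. r' v = ?p}" by auto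
      then have "card {v\<in>L. r' v \<le> ?p} \<le> card {v\<in>L. r' v \<le> i} + card {v\<in>L. r' v = ?p}"
        by (metis card_Un_le)
      moreover have "card {v\<in>L. r' v = ?p} \<le> Suc 0"
        using finL rk_inj[OF r'] L by (subst card_le_Suc0_iff_eq) (auto simp: inj_on_def subset_iff)
      ultimately have c2: "card {v\<in>L. r' v \<le> ?p} \<le> card {v\<in>L. rs v \<le> i} + 1" using Suc.IH by linarith
      have notL: "v \<notin> L" if "rs v = ?p" for v
      proof
        assume vL: "v \<in> L"
        have "{v\<in>L. rs v \<le> ?p} = insert v {v\<in>L. rs v \<le> i}"
          using vL that injrs L by (auto simp: inj_on_def subset_iff le_Suc_eq)
        then have "card {v\<in>L. rs v \<le> ?p} = card {v\<in>L. rs v \<le> i} + 1"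
          using finL that by simp
        then show False using c1 c2 by linarith
      qed
      have pn: "?p \<le> card U"
      proof (rule ccontr)
        assume "\<not> ?p \<le> card U"
        then have "{v\<in>L. rs v \<le> ?p} = L" using rk_range[OF rs] L by fastforce
        moreover have "card {v\<in>L. r' v \<le> ?p} \<le> card L" using finL by (intro card_mono) auto
        ultimately show False using c1 by simp
      qed
      obtain x where xU: "x \<in> U" and xp: "rs x = ?p" using rk_surj[OF rs, of ?p] pn by auto
      have xL: "x \<notin> L" using notL xp by auto
      have "(\<Sum>k\<in>{1..t}. card ({v\<in>L. rs v \<le> ?p} \<inter> C k)) < (\<Sum>k\<in>{1..t}. card ({v\<in>L. r' v \<le> ?p} \<inter> C k))"
      proof -
        have "{v\<in>L. rs v \<le> ?p} \<subseteq> U" "{v\<in>L. r' v \<le> ?p} \<subseteq> U" using L by auto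
        then show ?thesis using c1 card_groups[of "{v\<in>L. rs v \<le> ?p}"] card_groups[of "{v\<in>L. r' v \<le> ?p}"] by simp
      qed
      then obtain a where a: "a \<in> {1..t}"
        and ca: "card ({v\<in>L. rs v \<le> ?p} \<inter> C a) < card ({v\<in>L. r' v \<le> ?p} \<inter> C a)"
        by (meson not_less sum_mono)
      have finLa: "finite (L \<inter> C a)" using finL by auto
      obtain v where vL: "v \<in> L" and va: "v \<in> C a" and vp: "?p < rs v"
      proof (rule ccontr)
        assume "\<not> thesis"
        then have "\<forall>v\<in>L \<inter> C a. rs v \<le> ?p" using that by force
        then have "{v\<in>L. r' v \<le> ?p} \<inter> C a \<subseteq> {v\<in>L. rs v \<le> ?p} \<inter> C a" by auto
        then have "card ({v\<in>L. r' v \<le> ?p} \<inter> C a) \<le> card ({v\<in>L. rs v \<le> ?p} \<inter> C a)"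
          using finL by (intro card_mono) auto
        then show False using ca by simp
      qed
      have xa: "x \<notin> C a"
      proof
        assume "x \<in> C a"
        then show False using samegroup[OF a _ va xL vL] xp vp by simp
      qed
      have "\<exists>y. (y \<in> C a \<and> ?p < rs y) \<and> (\<forall>z. z \<in> C a \<and> ?p < rs z \<longrightarrow> rs y \<le> rs z)"
        using va vp by (intro ex_has_least_nat[where m = rs]) auto
      then obtain y where ya: "y \<in> C a" and yp: "?p < rs y"
        and ymin: "\<And>z. z \<in> C a \<Longrightarrow> ?p < rs z \<Longrightarrow> rs y \<le> rs z" by blast
      have yU: "y \<in> U" using partC a ya by auto
      have vU: "v \<in> U" using vL L by auto
      have yL: "y \<in> L"
      proof (rule ccontr)
        assume yL: "y \<notin> L"
        have "y \<noteq> v" using yL vL by auto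
        then have "rs y \<noteq> rs v" using injrs yU vU by (auto dest: inj_onD)
        then have "rs y < rs v" using ymin[OF va vp] by simp
        then show False using samegroup[OF a ya va yL vL] by simp
      qed
      show False
      proof (rule noswap[OF xU xL yL])
        show "rs x < rs y" using xp yp by simp
      next
        fix j k assume k: "k \<in> {1..t}" and j: "j \<in> {1..card U}" and xj: "rs x \<le> j" and jy: "j < rs y"
          and yk: "y \<in> C k" and xk: "x \<notin> C k"
        have ka: "k = a" using group_uniq[OF k a yk ya] .
        have sub1: "{z \<in> C a. rs z \<le> j} \<subseteq> {v\<in>L. rs v \<le> ?p} \<inter> C a"
        proof
          fix z assume z: "z \<in> {z \<in> C a. rs z \<le> j}"
          have zp: "rs z \<le> ?p"
          proof (rule ccontr)
            assume "\<not> rs z \<le> ?p"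
            then have "rs y \<le> rs z" using ymin z by auto
            then show False using z jy by auto
          qed
          have "z \<in> L"
          proof (rule ccontr)
            assume zL: "z \<notin> L"
            show False using samegroup[OF a _ va zL vL] z zp vp by auto
          qed
          then show "z \<in> {v\<in>L. rs v \<le> ?p} \<inter> C a" using z zp by auto
        qed
        have sub2: "{v\<in>L. r' v \<le> ?p} \<inter> C a \<subseteq> {z \<in> C a. r' z \<le> j}" using xj xp by auto
        have finCa: "finite (C a)" using finC[OF a] .
        have "card {z \<in> C a. rs z \<le> j} \<le> card ({v\<in>L. rs v \<le> ?p} \<inter> C a)"
          using sub1 finL by (intro card_mono) auto
        also have "\<dots> < card ({v\<in>L. r' v \<le> ?p} \<inter> C a)" by (rule ca)
        also have "\<dots> \<le> card {z \<in> C a. r' z \<le> j}"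
          using sub2 finCa by (intro card_mono) auto
        finally have "int (card {z \<in> C a. rs z \<le> j}) + 1 \<le> int (card {z \<in> C a. r' z \<le> j})" by simp
        also have "\<dots> \<le> ub j a" using rk_ub[OF r' j a] .
        finally show "int (card {z \<in> C k. rs z \<le> j}) + 1 \<le> ub j k" using ka by simp
      qed
    qed
  qed
  have "(\<Sum>v\<in>L. f (r' v)) \<le> (\<Sum>v\<in>L. f (rs v))"
  proof -
    have "(\<Sum>i\<in>{1..<card U}. (f i - f (Suc i)) * card {v\<in>L. r' v \<le> i})
        \<le> (\<Sum>i\<in>{1..<card U}. (f i - f (Suc i)) * card {v\<in>L. rs v \<le> i})"
    proof (rule sum_mono)
      fix i assume i: "i \<in> {1..<card U}"
      have "f (Suc i) \<le> f i" using f_mono i by auto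
      then show "(f i - f (Suc i)) * card {v\<in>L. r' v \<le> i} \<le> (f i - f (Suc i)) * card {v\<in>L. rs v \<le> i}"
        using cnt[of i] by (intro mult_left_mono) auto
    qed
    then show ?thesis using abel[OF r' L] abel[OF rs L] by linarith
  qed
  then show ?thesis using rs dom by blast
qed

end


context rk_setting begin

lemma dval_sum:
  assumes E: "set_pmf E \<subseteq> SS"
  shows "dval f g E v = (\<Sum>r\<in>SS. pmf E r * f (r v)) - g v"
proof -
  have "dval f g E v = (\<Sum>r\<in>SS. (f (r v) - g v) * pmf E r)"
    unfolding dval_def V_def using E finite_SS by (intro integral_measure_pmf_real) auto
  also have "\<dots> = (\<Sum>r\<in>SS. pmf E r * f (r v)) - g v * (\<Sum>r\<in>SS. pmf E r)"
    by (simp add: algebra_simps sum_subtractf sum_distrib_left)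
  also have "(\<Sum>r\<in>SS. pmf E r) = 1" using sum_pmf_eq_1[OF finite_SS E] .
  finally show ?thesis by simp
qed

lemma sumL:
  assumes E: "set_pmf E \<subseteq> SS"
  shows "(\<Sum>v\<in>L. dval f g E v) = (\<Sum>r\<in>SS. pmf E r * (\<Sum>v\<in>L. f (r v))) - (\<Sum>v\<in>L. g v)"
proof -
  have "(\<Sum>v\<in>L. dval f g E v) = (\<Sum>v\<in>L. \<Sum>r\<in>SS. pmf E r * f (r v)) - (\<Sum>v\<in>L. g v)"
    using dval_sum[OF E] by (simp add: sum_subtractf)
  also have "(\<Sum>v\<in>L. \<Sum>r\<in>SS. pmf E r * f (r v)) = (\<Sum>r\<in>SS. pmf E r * (\<Sum>v\<in>L. f (r v)))"
    by (subst sum.swap) (simp add: sum_distrib_left)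
  finally show ?thesis .
qed

lemma total:
  assumes E: "set_pmf E \<subseteq> SS"
  shows "(\<Sum>v\<in>U. dval f g E v) = (\<Sum>i\<in>{1..card U}. f i) - (\<Sum>v\<in>U. g v)"
proof -
  have "(\<Sum>r\<in>SS. pmf E r * (\<Sum>v\<in>U. f (r v))) = (\<Sum>r\<in>SS. pmf E r * (\<Sum>i\<in>{1..card U}. f i))"
    by (intro sum.cong refl) (simp add: sum.reindex_bij_betw[OF rk_bij])
  also have "\<dots> = (\<Sum>i\<in>{1..card U}. f i)"
    using sum_pmf_eq_1[OF finite_SS E] by (simp add: sum_distrib_right[symmetric])
  finally show ?thesis using sumL[OF E, where L=U] by simp
qed

lemma min_part:
  assumes fair: "maxmin_fair U SS f g F" and D: "set_pmf D \<subseteq> SS" and Une: "U \<noteq> {}"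
  shows "(MIN v\<in>U. dval f g D v) \<le> (MIN v\<in>U. dval f g F v)"
proof (rule ccontr)
  assume "\<not> ?thesis"
  then have lt: "(MIN v\<in>U. dval f g F v) < (MIN v\<in>U. dval f g D v)" by simp
  have "(MIN v\<in>U. dval f g F v) \<in> (\<lambda>v. dval f g F v) ` U" using finU Une by (intro Min_in) auto
  then obtain u where u: "u \<in> U" "dval f g F u = (MIN v\<in>U. dval f g F v)" by auto
  have "dval f g D u \<ge> (MIN v\<in>U. dval f g D v)" using u finU by simp
  then have "dval f g D u > dval f g F u" using lt u by simp
  then obtain y where y: "y \<in> U" "dval f g D y < dval f g F y" "dval f g F y \<le> dval f g F u"
    using fair D u unfolding maxmin_fair_def by blast
  have "dval f g D y \<ge> (MIN v\<in>U. dval f g D v)" using y finU by simp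
  then show False using y u lt by simp
qed

lemma max_part:
  assumes fair: "maxmin_fair U SS f g F" and D: "set_pmf D \<subseteq> SS" and Une: "U \<noteq> {}"
  shows "(MAX v\<in>U. dval f g F v) \<le> (MAX v\<in>U. dval f g D v)"
proof (rule ccontr)
  define M where "M = (MAX v\<in>U. dval f g F v)"
  define MD where "MD = (MAX v\<in>U. dval f g D v)"
  assume "\<not> ?thesis"
  then have lt: "MD < M" unfolding M_def MD_def by simp
  have FS: "set_pmf F \<subseteq> SS" using fair unfolding maxmin_fair_def by auto
  have leM: "dval f g F v \<le> M" if "v \<in> U" for v unfolding M_def using that finU by simp
  have leMD: "dval f g D v \<le> MD" if "v \<in> U" for v unfolding MD_def using that finU by simp
  define H where "H = {v\<in>U. dval f g F v = M}"
  define L where "L = {v\<in>U. dval f g F v < M}"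
  have LU: "L \<subseteq> U" unfolding L_def by auto
  have finH: "finite H" "finite L" unfolding H_def L_def using finU by auto
  have UHL: "U = H \<union> L" "H \<inter> L = {}" unfolding H_def L_def using leM by (auto simp: order_le_less)
  have "M \<in> (\<lambda>v. dval f g F v) ` U" unfolding M_def using finU Une by (intro Max_in) auto
  then obtain u where u: "u \<in> U" "dval f g F u = M" by auto
  have "(\<Sum>v\<in>H. dval f g D v) < (\<Sum>v\<in>H. dval f g F v)"
  proof -
    have hl: "dval f g D v < dval f g F v" if "v \<in> H" for v
      using that leMD[of v] lt unfolding H_def by auto
    have "u \<in> H" using u unfolding H_def by auto
    then show ?thesis using hl by (intro sum_strict_mono_ex1[OF finH(1)]) (auto intro: less_imp_le)
  qed
  moreover have "(\<Sum>v\<in>U. dval f g D v) = (\<Sum>v\<in>U. dval f g F v)"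
    using total[OF D] total[OF FS] by simp
  moreover have "(\<Sum>v\<in>U. dval f g D v) = (\<Sum>v\<in>H. dval f g D v) + (\<Sum>v\<in>L. dval f g D v)"
    using UHL finH by (simp add: sum.union_disjoint)
  moreover have "(\<Sum>v\<in>U. dval f g F v) = (\<Sum>v\<in>H. dval f g F v) + (\<Sum>v\<in>L. dval f g F v)"
    using UHL finH by (simp add: sum.union_disjoint)
  ultimately have "(\<Sum>v\<in>L. dval f g F v) < (\<Sum>v\<in>L. dval f g D v)" by linarith
  define \<Phi> where "\<Phi> = (\<lambda>r. \<Sum>v\<in>L. f (r v))"
  have cmp: "(\<Sum>r\<in>SS. pmf F r * \<Phi> r) < (\<Sum>r\<in>SS. pmf D r * \<Phi> r)"
  proof -
    have a: "(\<Sum>v\<in>L. dval f g D v) = (\<Sum>r\<in>SS. pmf D r * \<Phi> r) - (\<Sum>v\<in>L. g v)"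
      unfolding \<Phi>_def by (rule sumL[OF D])
    have b: "(\<Sum>v\<in>L. dval f g F v) = (\<Sum>r\<in>SS. pmf F r * \<Phi> r) - (\<Sum>v\<in>L. g v)"
      unfolding \<Phi>_def by (rule sumL[OF FS])
    show ?thesis using a b \<open>(\<Sum>v\<in>L. dval f g F v) < _\<close> by linarith
  qed
  have SSne: "SS \<noteq> {}"
  proof -
    have "set_pmf D \<noteq> {}" by (rule set_pmf_not_empty)
    then show ?thesis using D by blast
  qed
  define h where "h = Max (\<Phi> ` SS)"
  have hge: "\<Phi> r \<le> h" if "r \<in> SS" for r unfolding h_def using finite_SS that by (intro Max_ge) auto
  have "h \<in> \<Phi> ` SS" unfolding h_def using finite_SS SSne by (intro Max_in) auto
  then obtain r' where r': "r' \<in> SS" "\<Phi> r' = h" by auto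
  have "(\<Sum>r\<in>SS. pmf D r * \<Phi> r) \<le> (\<Sum>r\<in>SS. pmf D r * h)"
  proof (rule sum_mono)
    fix r assume "r \<in> SS"
    then show "pmf D r * \<Phi> r \<le> pmf D r * h" using hge by (intro mult_left_mono) auto
  qed
  also have "\<dots> = h" using sum_pmf_eq_1[OF finite_SS D] by (simp add: sum_distrib_right[symmetric])
  finally have "(\<Sum>r\<in>SS. pmf F r * \<Phi> r) < h" using cmp by simp
  obtain r0 where r0: "r0 \<in> SS" "pmf F r0 > 0" "\<Phi> r0 < h"
  proof (rule ccontr)
    assume nt: "\<not> thesis"
    have "h = (\<Sum>r\<in>SS. pmf F r * h)" using sum_pmf_eq_1[OF finite_SS FS] by (simp add: sum_distrib_right[symmetric])
    also have "\<dots> \<le> (\<Sum>r\<in>SS. pmf F r * \<Phi> r)"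
    proof (rule sum_mono)
      fix r assume r: "r \<in> SS"
      show "pmf F r * h \<le> pmf F r * \<Phi> r"
      proof (cases "pmf F r > 0")
        case True
        have "\<not> \<Phi> r < h"
        proof
          assume "\<Phi> r < h"
          then show False using that[OF r True] nt by blast
        qed
        then have "h \<le> \<Phi> r" by simp
        then show ?thesis using True by (intro mult_left_mono) auto
      next
        case False then have "pmf F r = 0" using pmf_nonneg[of F r] by linarith
        then show ?thesis by simp
      qed
    qed
    finally show False using \<open>(\<Sum>r\<in>SS. pmf F r * \<Phi> r) < h\<close> by simp
  qed
  obtain r1 where r1: "r1 \<in> SS" "\<forall>v\<in>L. r1 v \<le> r0 v" "\<Phi> r' \<le> \<Phi> r1"
    using key[OF LU r0(1) r'(1)] unfolding \<Phi>_def by blast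
  have fle: "f (r0 v) \<le> f (r1 v)" if "v \<in> L" for v
  proof -
    have vU: "v \<in> U" using that LU by auto
    have "1 \<le> r1 v" "r1 v \<le> r0 v" "r0 v \<le> card U"
      using rk_range[OF r1(1) vU] rk_range[OF r0(1) vU] r1(2) that by auto
    then show ?thesis using f_mono by simp
  qed
  have "\<exists>v0\<in>L. f (r0 v0) < f (r1 v0)"
  proof (rule ccontr)
    assume "\<not> ?thesis"
    then have "\<Phi> r1 \<le> \<Phi> r0" unfolding \<Phi>_def by (intro sum_mono) (auto simp: not_less)
    then show False using r0 r1 r' by simp
  qed
  then obtain v0 where v0: "v0 \<in> L" "f (r0 v0) < f (r1 v0)" by blast
  define T where "T = (\<lambda>r. if r = r0 then r1 else r)"
  define D' where "D' = map_pmf T F"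
  have D'S: "set_pmf D' \<subseteq> SS" unfolding D'_def T_def using FS r1(1) by auto
  have diff: "dval f g D' v = dval f g F v + pmf F r0 * (f (r1 v) - f (r0 v))" for v
  proof -
    have "dval f g D' v = (\<Sum>r\<in>SS. V f g (T r) v * pmf F r)"
      unfolding dval_def D'_def integral_map_pmf using FS finite_SS
      by (intro integral_measure_pmf_real) auto
    also have "\<dots> = (\<Sum>r\<in>SS. V f g r v * pmf F r + (if r = r0 then pmf F r0 * (f (r1 v) - f (r0 v)) else 0))"
      by (intro sum.cong refl) (auto simp: T_def V_def algebra_simps)
    also have "\<dots> = (\<Sum>r\<in>SS. V f g r v * pmf F r) + pmf F r0 * (f (r1 v) - f (r0 v))"
      using r0(1) finite_SS by (simp add: sum.distrib)
    also have "(\<Sum>r\<in>SS. V f g r v * pmf F r) = dval f g F v"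
      unfolding dval_def using FS finite_SS by (intro integral_measure_pmf_real[symmetric]) auto
    finally show ?thesis .
  qed
  have "dval f g D' v0 > dval f g F v0" using diff[of v0] v0 r0(2) by simp
  then obtain y where y: "y \<in> U" "dval f g D' y < dval f g F y" "dval f g F y \<le> dval f g F v0"
    using fair D'S v0 LU unfolding maxmin_fair_def by blast
  have "y \<in> L" using y v0(1) unfolding L_def by auto
  then have "dval f g D' y \<ge> dval f g F y" using diff[of y] fle[of y] r0(2)
    by (simp add: mult_nonneg_nonneg)
  then show False using y by simp
qed

end

theorem mainTheorem3:
  fixes U :: "'a set" and C :: "nat \<Rightarrow> 'a set" and t :: nat
    and R :: "'a \<Rightarrow> real" and ub :: "nat \<Rightarrow> nat \<Rightarrow> int"
    and f :: "nat \<Rightarrow> real" and g :: "'a \<Rightarrow> real"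
    and F D :: "('a \<Rightarrow> nat) pmf"
  assumes finU: "finite U"
    and partC: "\<forall>k\<in>{1..t}. C k \<subseteq> U"
    and disjC: "\<forall>k\<in>{1..t}. \<forall>l\<in>{1..t}. k \<noteq> l \<longrightarrow> C k \<inter> C l = {}"
    and coverC: "(\<Union>k\<in>{1..t}. C k) = U"
    and injR: "inj_on R U"
    and f_mono: "\<forall>i j. 1 \<le> i \<longrightarrow> i \<le> j \<longrightarrow> j \<le> card U \<longrightarrow> f j \<le> f i"
    and g_mono: "\<forall>u\<in>U. \<forall>v\<in>U. R u \<ge> R v \<longrightarrow> g u \<ge> g v"
    and S_ne: "feasible U C t ub \<noteq> {}"
    and fair: "maxmin_fair U (feasible U C t ub) f g F"
    and D_S: "set_pmf D \<subseteq> feasible U C t ub"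
  shows "(MAX u\<in>U. dval f g F u) - (MIN v\<in>U. dval f g F v)
           \<le> (MAX u\<in>U. dval f g D u) - (MIN v\<in>U. dval f g D v)"
proof -
  interpret rk_setting U C t ub f using finU partC disjC coverC f_mono by unfold_locales
  show ?thesis
  proof (cases "U = {}")
    case True then show ?thesis by simp
  next
    case False
    have "(MAX u\<in>U. dval f g F u) \<le> (MAX u\<in>U. dval f g D u)" by (rule max_part[OF fair D_S False])
    moreover have "(MIN v\<in>U. dval f g D v) \<le> (MIN v\<in>U. dval f g F v)" by (rule min_part[OF fair D_S False])
    ultimately show ?thesis by linarith
  qed
qed

end
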